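(* Consider the protocol $P_{RL}$ with parameter $N$ on a directed ring of size $n$ with $2\le n\le N$. Let $C_0\in\mathcal{C}_{NI}$ (defined in the context). Then no new leader is created in any execution starting from $C_0$: for every configuration $D$ reachable from $C_0$ and every $D'$ with $D\to D'$, every agent with $\mathit{leader}=0$ in $D$ has $\mathit{leader}=0$ in $D'$.
   Context: Model. A population is a directed ring of $n\ge 2$ anonymous agents $u_0,\dots,u_{n-1}$ (indices modulo $n$) with arcs $e_i=(u_i,u_{i+1})$. A configuration $C$ assigns a state to each agent; $C\to C'$ means that $C'$ is obtained from $C$ by one interaction on some arc $e_i$, in which initiator $u_i$ and responder $u_{i+1}$ update their states by the transition function and all other agents keep their states. A configuration is reachable from $C$ if it is obtained from $C$ by finitely many (possibly zero) such steps. Protocol $P_{RL}$ (parameter $N$). Each agent has variables $\mathit{leader}\in\{0,1\}$, $\mathit{bullet}\in\{0,1,2\}$, $\mathit{shield}\in\{0,1\}$, $\mathit{signal}\in\{0,1\}$, $\mathit{dist}\in\{0,\dots,N\}$. In an interaction with initiator $l$ and responder $r$ the following are executed in order: 1. If $l.\mathit{leader}=1$ then $l.\mathit{dist}\gets 0$. 2. If $r.\mathit{leader}=1$ then $r.\mathit{dist}\gets 0$; else if $r.\mathit{bullet}=0$ then $r.\mathit{dist}\gets\min(l.\mathit{dist}+1,N)$. 3. If $r.\mathit{dist}=N$ then $r.\mathit{leader}\gets1$, $r.\mathit{bullet}\gets2$, $r.\mathit{shield}\gets1$, $r.\mathit{signal}\gets0$, $r.\mathit{dist}\gets0$. 4.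 If $l.\mathit{leader}=1$ and $l.\mathit{signal}=1$ then $l.\mathit{bullet}\gets2$, $l.\mathit{shield}\gets1$, $l.\mathit{signal}\gets0$. 5. If $r.\mathit{leader}=1$ and $r.\mathit{signal}=1$ then $r.\mathit{bullet}\gets1$, $r.\mathit{shield}\gets0$, $r.\mathit{signal}\gets0$. 6. If $l.\mathit{bullet}>0$ and $r.\mathit{leader}=1$: set $r.\mathit{leader}\gets0$ if ($l.\mathit{bullet}=2$ and $r.\mathit{shield}=0$); then $l.\mathit{bullet}\gets0$. Else, if $l.\mathit{bullet}>0$ and $r.\mathit{leader}=0$: if $r.\mathit{bullet}=0$ then $r.\mathit{bullet}\gets l.\mathit{bullet}$; then $l.\mathit{bullet}\gets0$ and $r.\mathit{signal}\gets0$. 7. $l.\mathit{signal}\gets\max(l.\mathit{signal},r.\mathit{signal},r.\mathit{leader})$. An agent is a leader if $\mathit{leader}=1$ and a follower otherwise. Definitions (in a configuration with at least one leader). $\mathrm{dist}_L(i)=\min\{j\ge0: u_{i-j}.\mathit{leader}=1\}$ and $\mathrm{dist}_R(i)=\min\{j\ge0: u_{i+j}.\mathit{leader}=1\}$. $\mathrm{peaceful}(i)$ holds iff $u_{i-\mathrm{dist}_L(i)}.\mathit{shield}=1$ and $u_{i-j}.\mathit{signal}=0$ for all $0\le j\le\mathrm{dist}_L(i)$. $\mathrm{modest}(i)$ holds iff $\mathrm{peaceful}(i)$ holds and $u_{i-j}.\mathit{dist}\le\mathrm{dist}_L(i-j)$ for all $0\le j\le\mathrm{dist}_L(i)$. $\mathrm{secure}(i)$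 holds iff $u_i.\mathit{dist}=0$ when $u_i.\mathit{leader}=1$, and $u_i.\mathit{dist}\le N-\mathrm{dist}_R(i)$ when $u_i.\mathit{leader}=0$. $\mathcal{C}_{PB}$ is the set of configurations with at least one leader in which every $u_j$ with $u_j.\mathit{bullet}=2$ satisfies $\mathrm{peaceful}(j)$. $\mathcal{C}_{NI}$ is the set of configurations in $\mathcal{C}_{PB}$ in which every agent $u_i$ satisfies $\mathrm{secure}(i)$ and every $u_j$ with $u_j.\mathit{bullet}=2$ satisfies $\mathrm{modest}(j)$. *)

theory Defs
  imports Main
begin

record agent =
  leader :: nat
  bullet :: nat
  shield :: nat
  signal :: nat
  dist   :: nat

definition valid_state :: "nat \<Rightarrow> agent \<Rightarrow> bool" where
  "valid_state N s \<longleftrightarrow> leader s \<le> 1 \<and> bullet s \<le> 2 \<and> shield s \<le> 1 \<and> signal s \<le> 1 \<and> dist s \<le> N"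

text \<open>Transition function: initiator l, responder r; steps 1--7 executed in order.\<close>

definition prl_trans :: "nat \<Rightarrow> agent \<Rightarrow> agent \<Rightarrow> agent \<times> agent" where
  "prl_trans N l r = (let
     l1 = (if leader l = 1 then l\<lparr>dist := 0\<rparr> else l);
     r1 = (if leader r = 1 then r\<lparr>dist := 0\<rparr>
           else if bullet r = 0 then r\<lparr>dist := min (dist l1 + 1) N\<rparr> else r);
     r2 = (if dist r1 = N
           then r1\<lparr>leader := 1, bullet := 2, shield := 1, signal := 0, dist := 0\<rparr> else r1);
     l2 = (if leader l1 = 1 \<and> signal l1 = 1
           then l1\<lparr>bullet := 2, shield := 1, signal := 0\<rparr> else l1);
     r3 = (if leader r2 = 1 \<and> signal r2 = 1
           then r2\<lparr>bullet := 1, shield := 0, signal := 0\<rparr> else r2);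
     lr = (if 0 < bullet l2 \<and> leader r3 = 1 then
             (l2\<lparr>bullet := 0\<rparr>,
              if bullet l2 = 2 \<and> shield r3 = 0 then r3\<lparr>leader := 0\<rparr> else r3)
           else if 0 < bullet l2 \<and> leader r3 = 0 then
             (l2\<lparr>bullet := 0\<rparr>,
              (if bullet r3 = 0 then r3\<lparr>bullet := bullet l2\<rparr> else r3)\<lparr>signal := 0\<rparr>)
           else (l2, r3));
     l3 = fst lr; r4 = snd lr;
     l4 = l3\<lparr>signal := max (signal l3) (max (signal r4) (leader r4))\<rparr>
   in (l4, r4))"

text \<open>Configurations on a directed ring of n agents u_0..u_{n-1}: C i is the state of u_i
  for i < n (values at i >= n are irrelevant).\<close>

type_synonym config = "nat \<Rightarrow> agent"

definition valid_config :: "nat \<Rightarrow> nat \<Rightarrow> config \<Rightarrow> bool" where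
  "valid_config n N C \<longleftrightarrow> (\<forall>i<n. valid_state N (C i))"

definition step :: "nat \<Rightarrow> nat \<Rightarrow> config \<Rightarrow> config \<Rightarrow> bool" where
  "step n N C C' \<longleftrightarrow> (\<exists>i<n.
     C' = (C(i := fst (prl_trans N (C i) (C (Suc i mod n))),
             Suc i mod n := snd (prl_trans N (C i) (C (Suc i mod n))))))"

definition reachable :: "nat \<Rightarrow> nat \<Rightarrow> config \<Rightarrow> config \<Rightarrow> bool" where
  "reachable n N C D \<longleftrightarrow> (step n N)\<^sup>*\<^sup>* C D"

definition ag :: "nat \<Rightarrow> config \<Rightarrow> int \<Rightarrow> agent" where
  "ag n C k = C (nat (k mod int n))"

definition distL :: "nat \<Rightarrow> config \<Rightarrow> int \<Rightarrow> nat" where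
  "distL n C i = (LEAST j::nat. leader (ag n C (i - int j)) = 1)"

definition distR :: "nat \<Rightarrow> config \<Rightarrow> int \<Rightarrow> nat" where
  "distR n C i = (LEAST j::nat. leader (ag n C (i + int j)) = 1)"

definition peaceful :: "nat \<Rightarrow> config \<Rightarrow> int \<Rightarrow> bool" where
  "peaceful n C i \<longleftrightarrow>
     shield (ag n C (i - int (distL n C i))) = 1 \<and>
     (\<forall>j\<le>distL n C i. signal (ag n C (i - int j)) = 0)"

definition modest :: "nat \<Rightarrow> config \<Rightarrow> int \<Rightarrow> bool" where
  "modest n C i \<longleftrightarrow> peaceful n C i \<and>
     (\<forall>j\<le>distL n C i. dist (ag n C (i - int j)) \<le> distL n C (i - int j))"

definition secure :: "nat \<Rightarrow> nat \<Rightarrow> config \<Rightarrow> int \<Rightarrow> bool" where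
  "secure n N C i \<longleftrightarrow>
     (leader (ag n C i) = 1 \<longrightarrow> dist (ag n C i) = 0) \<and>
     (leader (ag n C i) = 0 \<longrightarrow> int (dist (ag n C i)) \<le> int N - int (distR n C i))"

definition C_PB :: "nat \<Rightarrow> config \<Rightarrow> bool" where
  "C_PB n C \<longleftrightarrow> (\<exists>i<n. leader (C i) = 1) \<and>
     (\<forall>j<n. bullet (C j) = 2 \<longrightarrow> peaceful n C (int j))"

definition C_NI :: "nat \<Rightarrow> nat \<Rightarrow> config \<Rightarrow> bool" where
  "C_NI n N C \<longleftrightarrow> C_PB n C \<and> (\<forall>i<n. secure n N C (int i)) \<and>
     (\<forall>j<n. bullet (C j) = 2 \<longrightarrow> modest n C (int j))"

end

theory Submission
  imports Defs
begin


definition pL1 :: "agent \<Rightarrow> agent" where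
  "pL1 l = (if leader l = 1 then l\<lparr>dist := 0\<rparr> else l)"
definition pR1 :: "nat \<Rightarrow> agent \<Rightarrow> agent \<Rightarrow> agent" where
  "pR1 N l1 r = (if leader r = 1 then r\<lparr>dist := 0\<rparr>
           else if bullet r = 0 then r\<lparr>dist := min (dist l1 + 1) N\<rparr> else r)"
definition pR2 :: "nat \<Rightarrow> agent \<Rightarrow> agent" where
  "pR2 N r1 = (if dist r1 = N
           then r1\<lparr>leader := 1, bullet := 2, shield := 1, signal := 0, dist := 0\<rparr> else r1)"
definition pL2 :: "agent \<Rightarrow> agent" where
  "pL2 l1 = (if leader l1 = 1 \<and> signal l1 = 1
           then l1\<lparr>bullet := 2, shield := 1, signal := 0\<rparr> else l1)"
definition pR3 :: "agent \<Rightarrow> agent" where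
  "pR3 r2 = (if leader r2 = 1 \<and> signal r2 = 1
           then r2\<lparr>bullet := 1, shield := 0, signal := 0\<rparr> else r2)"
definition pLR :: "agent \<Rightarrow> agent \<Rightarrow> agent \<times> agent" where
  "pLR l2 r3 = (if 0 < bullet l2 \<and> leader r3 = 1 then
             (l2\<lparr>bullet := 0\<rparr>,
              if bullet l2 = 2 \<and> shield r3 = 0 then r3\<lparr>leader := 0\<rparr> else r3)
           else if 0 < bullet l2 \<and> leader r3 = 0 then
             (l2\<lparr>bullet := 0\<rparr>,
              (if bullet r3 = 0 then r3\<lparr>bullet := bullet l2\<rparr> else r3)\<lparr>signal := 0\<rparr>)
           else (l2, r3))"
definition pL4 :: "agent \<Rightarrow> agent \<Rightarrow> agent" where
  "pL4 l3 r4 = l3\<lparr>signal := max (signal l3) (max (signal r4) (leader r4))\<rparr>"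

lemma prl_trans_stages:
  "prl_trans N l r = (let l1 = pL1 l; r1 = pR1 N l1 r; r2 = pR2 N r1; l2 = pL2 l1; r3 = pR3 r2;
     lr = pLR l2 r3 in (pL4 (fst lr) (snd lr), snd lr))"
  unfolding prl_trans_def pL1_def pR1_def pR2_def pL2_def pR3_def pLR_def pL4_def Let_def ..

lemma pL1_f: "leader (pL1 l) = leader l" "bullet (pL1 l) = bullet l" "shield (pL1 l) = shield l"
  "signal (pL1 l) = signal l" "dist (pL1 l) = (if leader l = 1 then 0 else dist l)"
  by (simp_all add: pL1_def)
lemma pR1_f: "leader (pR1 N l r) = leader r" "bullet (pR1 N l r) = bullet r" "shield (pR1 N l r) = shield r"
  "signal (pR1 N l r) = signal r"
  "dist (pR1 N l r) = (if leader r = 1 then 0 else if bullet r = 0 then min (dist l + 1) N else dist r)"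
  by (simp_all add: pR1_def)
lemma pR2_f: "dist r \<noteq> N \<Longrightarrow> pR2 N r = r"
  by (simp_all add: pR2_def)
lemma pL2_f: "leader (pL2 l) = leader l"
  "bullet (pL2 l) = (if leader l = 1 \<and> signal l = 1 then 2 else bullet l)"
  "shield (pL2 l) = (if leader l = 1 \<and> signal l = 1 then 1 else shield l)"
  "signal (pL2 l) = (if leader l = 1 \<and> signal l = 1 then 0 else signal l)"
  "dist (pL2 l) = dist l"
  by (simp_all add: pL2_def)
lemma pR3_f: "leader (pR3 l) = leader l"
  "bullet (pR3 l) = (if leader l = 1 \<and> signal l = 1 then 1 else bullet l)"
  "shield (pR3 l) = (if leader l = 1 \<and> signal l = 1 then 0 else shield l)"
  "signal (pR3 l) = (if leader l = 1 \<and> signal l = 1 then 0 else signal l)"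
  "dist (pR3 l) = dist l"
  by (simp_all add: pR3_def)
lemma pLR_b: "leader r \<le> 1 \<Longrightarrow> bullet (fst (pLR l r)) = 0"
  by (simp add: pLR_def)
lemma pLR_f: "leader (fst (pLR l r)) = leader l"
  "shield (fst (pLR l r)) = shield l" "signal (fst (pLR l r)) = signal l" "dist (fst (pLR l r)) = dist l"
  "leader (snd (pLR l r)) = (if 0 < bullet l \<and> leader r = 1 \<and> bullet l = 2 \<and> shield r = 0 then 0 else leader r)"
  "bullet (snd (pLR l r)) = (if 0 < bullet l \<and> leader r \<noteq> 1 \<and> leader r = 0 \<and> bullet r = 0 then bullet l else bullet r)"
  "signal (snd (pLR l r)) = (if 0 < bullet l \<and> leader r \<noteq> 1 \<and> leader r = 0 then 0 else signal r)"
  "shield (snd (pLR l r)) = shield r" "dist (snd (pLR l r)) = dist r"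
  by (simp_all add: pLR_def)
lemma pL4_f: "leader (pL4 l r) = leader l" "bullet (pL4 l r) = bullet l" "shield (pL4 l r) = shield l"
  "dist (pL4 l r) = dist l" "signal (pL4 l r) = max (signal l) (max (signal r) (leader r))"
  by (simp_all add: pL4_def)


lemma tr_l:
  assumes "leader r \<le> 1"
  shows
  "leader (fst (prl_trans N l r)) = leader l"
  "dist (fst (prl_trans N l r)) = (if leader l = 1 then 0 else dist l)"
  "shield (fst (prl_trans N l r)) = (if leader l = 1 \<and> signal l = 1 then 1 else shield l)"
  "signal (fst (prl_trans N l r)) = max (if leader l = 1 \<and> signal l = 1 then 0 else signal l)
      (max (signal (snd (prl_trans N l r))) (leader (snd (prl_trans N l r))))"
  by (simp_all add: prl_trans_stages Let_def pL1_f pR1_f pL2_f pR3_f pLR_f pL4_f)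

lemma tr_lb:
  assumes "leader r \<le> 1" "dist (pR1 N (pL1 l) r) \<noteq> N"
  shows "bullet (fst (prl_trans N l r)) = 0"
  using assms by (simp add: prl_trans_stages Let_def pR2_f pL1_f pR1_f pL2_f pR3_f pLR_f pL4_f pLR_b)

definition NF :: "nat \<Rightarrow> agent \<Rightarrow> agent \<Rightarrow> bool" where
  "NF N l r \<longleftrightarrow> dist (pR1 N (pL1 l) r) \<noteq> N"

lemma NF_iff: "NF N l r \<longleftrightarrow> (if leader r = 1 then 0 else if bullet r = 0 then min ((if leader l = 1 then 0 else dist l) + 1) N else dist r) \<noteq> N"
  by (simp add: NF_def pR1_f pL1_f)

lemma tr_r:
  assumes "valid_state N l" "valid_state N r" "NF N l r"
  shows
  "leader (snd (prl_trans N l r)) = (if leader r = 1 \<and> (if leader l = 1 \<and> signal l = 1 then 2 else bullet l) = 2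
        \<and> (if signal r = 1 then 0 else shield r) = 0 then 0 else leader r)"
  "dist (snd (prl_trans N l r)) = (if leader r = 1 then 0 else if bullet r = 0 then min ((if leader l = 1 then 0 else dist l) + 1) N else dist r)"
  "bullet (snd (prl_trans N l r)) = (if leader r = 1 then (if signal r = 1 then 1 else bullet r)
        else if bullet r = 0 then (if leader l = 1 \<and> signal l = 1 then 2 else bullet l) else bullet r)"
  "shield (snd (prl_trans N l r)) = (if leader r = 1 \<and> signal r = 1 then 0 else shield r)"
  "signal (snd (prl_trans N l r)) = (if leader r = 1 \<or> (leader l = 1 \<and> signal l = 1) \<or> bullet l > 0 then 0 else signal r)"
  using assms unfolding NF_def valid_state_def
  by (auto simp add: prl_trans_stages Let_def pR2_f pL1_f pR1_f pL2_f pR3_f pLR_f pL4_f)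

lemma tr_valid:
  assumes "valid_state N l" "valid_state N r" "NF N l r"
  shows "valid_state N (fst (prl_trans N l r))" "valid_state N (snd (prl_trans N l r))"
proof -
  have r: "leader r \<le> 1" using assms(2) by (simp add: valid_state_def)
  show "valid_state N (fst (prl_trans N l r))" "valid_state N (snd (prl_trans N l r))"
    using assms unfolding valid_state_def
    by (auto simp add: tr_l[OF r] tr_lb[OF r] tr_r[OF assms] NF_def)
qed



lemma ag_cong: "k mod int n = k' mod int n \<Longrightarrow> ag n C k = ag n C k'"
  by (simp add: ag_def)

lemma ag_int: "i < n \<Longrightarrow> ag n C (int i) = C i"
  by (simp add: ag_def)

definition HasL :: "nat \<Rightarrow> config \<Rightarrow> bool" where
  "HasL n C \<longleftrightarrow> (\<exists>i<n. leader (C i) = 1)"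

lemma exL: assumes "0 < n" "HasL n C" shows "\<exists>j<n. leader (ag n C (k - int j)) = 1"
proof -
  obtain i where i: "i < n" "leader (C i) = 1" using assms(2) by (auto simp: HasL_def)
  define j where "j = nat ((k - int i) mod int n)"
  have j: "j < n" using assms(1) by (simp add: j_def nat_less_iff)
  have ij: "int j = (k - int i) mod int n" using assms(1) by (simp add: j_def)
  have "(k - int j) mod int n = (k - (k - int i)) mod int n"
    unfolding ij by (rule mod_diff_right_eq)
  then have "(k - int j) mod int n = int i mod int n" by simp
  then have "ag n C (k - int j) = C i" using i(1) by (simp add: ag_def)
  then show ?thesis using i j by auto
qed

lemma exR: assumes "0 < n" "HasL n C" shows "\<exists>j<n. leader (ag n C (k + int j)) = 1"
proof -
  obtain i where i: "i < n" "leader (C i) = 1" using assms(2) by (auto simp: HasL_def)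
  define j where "j = nat ((int i - k) mod int n)"
  have j: "j < n" using assms(1) by (simp add: j_def nat_less_iff)
  have ij: "int j = (int i - k) mod int n" using assms(1) by (simp add: j_def)
  have "(k + int j) mod int n = (k + (int i - k)) mod int n"
    unfolding ij by (rule mod_add_right_eq)
  then have "(k + int j) mod int n = int i mod int n" by simp
  then have "ag n C (k + int j) = C i" using i(1) by (simp add: ag_def)
  then show ?thesis using i j by auto
qed

lemma dL_le: "leader (ag n C (k - int j)) = 1 \<Longrightarrow> distL n C k \<le> j"
  unfolding distL_def by (rule Least_le)

lemma dR_le: "leader (ag n C (k + int j)) = 1 \<Longrightarrow> distR n C k \<le> j"
  unfolding distR_def by (rule Least_le)

lemma dL_min: "j < distL n C k \<Longrightarrow> leader (ag n C (k - int j)) \<noteq> 1"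
  unfolding distL_def by (rule not_less_Least)

lemma dR_min: "j < distR n C k \<Longrightarrow> leader (ag n C (k + int j)) \<noteq> 1"
  unfolding distR_def by (rule not_less_Least)

lemma dL_lead: assumes "0 < n" "HasL n C" shows "leader (ag n C (k - int (distL n C k))) = 1"
proof -
  obtain j where "leader (ag n C (k - int j)) = 1" using exL[OF assms, of k] by blast
  then show ?thesis unfolding distL_def by (rule LeastI)
qed

lemma dR_lead: assumes "0 < n" "HasL n C" shows "leader (ag n C (k + int (distR n C k))) = 1"
proof -
  obtain j where "leader (ag n C (k + int j)) = 1" using exR[OF assms, of k] by blast
  then show ?thesis unfolding distR_def by (rule LeastI)
qed

lemma dL_lt: assumes "0 < n" "HasL n C" shows "distL n C k < n"
proof -
  obtain j where "j < n" "leader (ag n C (k - int j)) = 1" using exL[OF assms, of k] by blast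
  then show ?thesis using dL_le[of n C k j] by linarith
qed

lemma dR_lt: assumes "0 < n" "HasL n C" shows "distR n C k < n"
proof -
  obtain j where "j < n" "leader (ag n C (k + int j)) = 1" using exR[OF assms, of k] by blast
  then show ?thesis using dR_le[of n C k j] by linarith
qed

lemma dL_eq: "leader (ag n C (k - int e)) = 1 \<Longrightarrow> (\<And>j. j < e \<Longrightarrow> leader (ag n C (k - int j)) \<noteq> 1)
   \<Longrightarrow> distL n C k = e"
  unfolding distL_def by (rule Least_equality) (auto simp: not_less[symmetric])

lemma dR_eq: "leader (ag n C (k + int e)) = 1 \<Longrightarrow> (\<And>j. j < e \<Longrightarrow> leader (ag n C (k + int j)) \<noteq> 1)
   \<Longrightarrow> distR n C k = e"
  unfolding distR_def by (rule Least_equality) (auto simp: not_less[symmetric])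

lemma dL_shift: assumes "0 < n" "HasL n C" "j \<le> distL n C k"
  shows "distL n C (k - int j) = distL n C k - j"
proof (rule dL_eq)
  show "leader (ag n C (k - int j - int (distL n C k - j))) = 1"
    using dL_lead[OF assms(1,2), of k] assms(3) by (simp add: of_nat_diff algebra_simps)
  fix i assume "i < distL n C k - j"
  then have "i + j < distL n C k" by simp
  from dL_min[OF this] show "leader (ag n C (k - int j - int i)) \<noteq> 1" by (simp add: algebra_simps)
qed

lemma dR_step: assumes "leader (ag n C k) \<noteq> 1" "0 < n" "HasL n C"
  shows "distR n C k = Suc (distR n C (k + 1))"
proof (rule dR_eq)
  show "leader (ag n C (k + int (Suc (distR n C (k + 1))))) = 1"
    using dR_lead[OF assms(2,3), of "k+1"] by (simp add: algebra_simps)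
  fix j assume j: "j < Suc (distR n C (k + 1))"
  show "leader (ag n C (k + int j)) \<noteq> 1"
  proof (cases j)
    case 0 then show ?thesis using assms(1) by simp
  next
    case (Suc i) then have "i < distR n C (k+1)" using j by simp
    from dR_min[OF this] show ?thesis using Suc by (simp add: algebra_simps)
  qed
qed

lemma dist_same:
  assumes "\<And>k. (leader (ag n D k) = 1) = (leader (ag n C k) = 1)"
  shows "distL n D = distL n C" "distR n D = distR n C"
  using assms by (simp_all add: distL_def distR_def fun_eq_iff)



lemma mshift: "x mod (m::int) = y mod m \<Longrightarrow> x' - x = y' - y \<Longrightarrow> x' mod m = y' mod m"
proof -
  assume a1: "x mod m = y mod m" and a2: "x' - x = y' - y"
  have "x' mod m = (x mod m + (x' - x)) mod m" by (simp add: mod_add_left_eq)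
  also have "\<dots> = (y mod m + (y' - y)) mod m" using a1 a2 by simp
  also have "\<dots> = y' mod m" by (simp add: mod_add_left_eq)
  finally show ?thesis .
qed

lemma ag_valid: "valid_config n N C \<Longrightarrow> 0 < n \<Longrightarrow> valid_state N (ag n C k)"
  unfolding valid_config_def ag_def by (simp add: nat_less_iff)

lemma HasL_ag: "0 < n \<Longrightarrow> leader (ag n C k) = 1 \<Longrightarrow> HasL n C"
  unfolding HasL_def ag_def
proof -
  assume "0 < n" "leader (C (nat (k mod int n))) = 1"
  moreover have "nat (k mod int n) < n" using \<open>0 < n\<close> by (simp add: nat_less_iff)
  ultimately show "\<exists>i<n. leader (C i) = 1" by blast
qed

lemma dL_cong: "p mod int n = p' mod int n \<Longrightarrow> distL n C p = distL n C p'"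
proof -
  assume h: "p mod int n = p' mod int n"
  have "\<And>j. ag n C (p - int j) = ag n C (p' - int j)"
    by (rule ag_cong, rule mshift[OF h]) simp
  then show ?thesis unfolding distL_def by simp
qed

locale stp =
  fixes n N :: nat and C :: config and a :: nat
  assumes n2: "2 \<le> n" and nN: "n \<le> N" and aN: "a < n"
   and V: "valid_config n N C" and H: "HasL n C"
   and S: "\<forall>k. secure n N C k" and M: "\<forall>k. bullet (ag n C k) = 2 \<longrightarrow> modest n C k"
begin

definition "b = Suc a mod n"
definition "lA = C a"
definition "rB = C b"
definition "lN = fst (prl_trans N lA rB)"
definition "rN = snd (prl_trans N lA rB)"
definition "D = C(a := lN, b := rN)"
definition "A = int a"
definition "eqA p \<longleftrightarrow> p mod int n = A"
definition "eqB p \<longleftrightarrow> p mod int n = (A + 1) mod int n"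

lemma n0: "0 < n" using n2 by simp

lemma A_mod: "A mod int n = A" using aN by (simp add: A_def)

lemma agC_A: "eqA p \<Longrightarrow> ag n C p = lA"
  by (simp add: eqA_def ag_def A_def lA_def)

lemma ib: "int b = (A + 1) mod int n" unfolding b_def A_def by (simp add: of_nat_mod add.commute)

lemma b_eq: "nat ((A + 1) mod int n) = b"
  using ib by simp

lemma agC_B: "eqB p \<Longrightarrow> ag n C p = rB"
  using b_eq by (simp add: eqB_def ag_def rB_def)

lemma ab: "a \<noteq> b"
proof (cases "Suc a < n")
  case True then show ?thesis by (simp add: b_def)
next
  case False then have "Suc a = n" using aN by simp
  then show ?thesis using n2 by (simp add: b_def)
qed

lemma AB: "\<not> (eqA p \<and> eqB p)"
  using ab b_eq A_mod unfolding eqA_def eqB_def A_def by force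

lemma agD: "ag n D p = (if eqA p then lN else if eqB p then rN else ag n C p)"
proof -
  have p0: "p mod int n \<ge> 0" using n0 by simp
  have 1: "eqA p \<longleftrightarrow> nat (p mod int n) = a" unfolding eqA_def A_def using p0 by auto
  have 2: "eqB p \<longleftrightarrow> nat (p mod int n) = b" unfolding eqB_def ib[symmetric] using p0 by auto
  show ?thesis using ab unfolding ag_def D_def 1 2 by auto
qed

lemma eqA_B: "eqA p \<Longrightarrow> eqB (p + 1)"
  unfolding eqA_def eqB_def using A_mod by (metis mod_add_left_eq)

lemma eqB_A: "eqB p \<Longrightarrow> eqA (p - 1)"
  unfolding eqA_def eqB_def using A_mod by (metis add_diff_cancel_right' mod_diff_left_eq)

lemma eqA_A: "eqA A" using A_mod by (simp add: eqA_def)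

lemma vC: "valid_state N (ag n C p)" using ag_valid[OF V n0] .
lemma vl: "valid_state N lA" using vC[of A] agC_A[OF eqA_A] by simp
lemma vr: "valid_state N rB" using vC[of "A+1"] agC_B[OF eqA_B[OF eqA_A]] by simp

lemma lead01: "leader (ag n C p) \<noteq> 1 \<Longrightarrow> leader (ag n C p) = 0"
  using vC[of p] by (simp add: valid_state_def)

lemma secC1: "leader (ag n C p) = 1 \<Longrightarrow> dist (ag n C p) = 0"
  using S unfolding secure_def by auto

lemma secC0: "leader (ag n C p) \<noteq> 1 \<Longrightarrow> dist (ag n C p) + distR n C p \<le> N"
proof -
  assume h: "leader (ag n C p) \<noteq> 1"
  then have "leader (ag n C p) = 0" by (rule lead01)
  then have "int (dist (ag n C p)) \<le> int N - int (distR n C p)" using S unfolding secure_def by blast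
  then show ?thesis by linarith
qed


lemma agA: "ag n C A = lA" using agC_A[OF eqA_A] .
lemma agB: "ag n C (A + 1) = rB" using agC_B[OF eqA_B[OF eqA_A]] .

lemma l01: "leader lA \<noteq> 1 \<Longrightarrow> leader lA = 0" using vl by (simp add: valid_state_def)
lemma r01: "leader rB \<noteq> 1 \<Longrightarrow> leader rB = 0" using vr by (simp add: valid_state_def)
lemma sl01: "signal lA \<noteq> 1 \<Longrightarrow> signal lA = 0" using vl by (simp add: valid_state_def)
lemma sr01: "signal rB \<noteq> 1 \<Longrightarrow> signal rB = 0" using vr by (simp add: valid_state_def)

lemma nf: "NF N lA rB"
proof (cases "leader rB = 1")
  case True then show ?thesis using nN n2 by (simp add: NF_iff)
next
  case False
  have f: "leader (ag n C (A+1)) \<noteq> 1" using False agB by simp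
  have r1: "distR n C (A + 1) = Suc (distR n C (A + 1 + 1))" using dR_step[OF f n0 H] .
  have "dist rB + distR n C (A+1) \<le> N" using secC0[OF f] agB by simp
  then have dr: "dist rB < N" using r1 by linarith
  show ?thesis
  proof (cases "bullet rB = 0")
    case False then show ?thesis using dr \<open>leader rB \<noteq> 1\<close> by (simp add: NF_iff)
  next
    case True
    show ?thesis
    proof (cases "leader lA = 1")
      case True then show ?thesis using \<open>bullet rB = 0\<close> \<open>leader rB \<noteq> 1\<close> n2 nN by (simp add: NF_iff)
    next
      case lf: False
      have fl: "leader (ag n C A) \<noteq> 1" using lf agA by simp
      have "distR n C A = Suc (distR n C (A + 1))" using dR_step[OF fl n0 H] .
      moreover have "dist lA + distR n C A \<le> N" using secC0[OF fl] agA by simp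
      ultimately have "dist lA + 1 < N" using r1 by linarith
      then show ?thesis using \<open>bullet rB = 0\<close> \<open>leader rB \<noteq> 1\<close> lf by (simp add: NF_iff)
    qed
  qed
qed

lemma rle: "leader rB \<le> 1" using vr by (simp add: valid_state_def)

lemmas lNf = tr_l[OF rle, of N lA, folded lN_def rN_def]
lemma lN_bul: "bullet lN = 0" unfolding lN_def using tr_lb[OF rle] nf by (simp add: NF_def)
lemmas rNf = tr_r[OF vl vr nf, folded lN_def rN_def]

lemma vlN: "valid_state N lN" unfolding lN_def using tr_valid[OF vl vr nf] by simp
lemma vrN: "valid_state N rN" unfolding rN_def using tr_valid[OF vl vr nf] by simp

lemma vD: "valid_state N (ag n D p)" using vlN vrN vC[of p] by (simp add: agD)

lemma PD_eq: "\<not> eqB p \<Longrightarrow> leader (ag n D p) = leader (ag n C p)"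
  by (simp add: agD agC_A lNf)

lemma rN_lead1: "leader rN = 1 \<Longrightarrow> leader rB = 1"
  using rNf(1) by (auto split: if_splits)

lemma rN_fol: "leader rB \<noteq> 1 \<Longrightarrow> leader rN = leader rB"
  using rNf(1) by auto

lemma PD_imp: "leader (ag n D p) = 1 \<Longrightarrow> leader (ag n C p) = 1"
proof (cases "eqB p")
  case True
  assume h: "leader (ag n D p) = 1"
  have "\<not> eqA p" using AB True by blast
  then have "leader rN = 1" using h True by (simp add: agD)
  then show ?thesis using rN_lead1 agC_B[OF True] by simp
next
  case False then show "leader (ag n D p) = 1 \<Longrightarrow> ?thesis" using PD_eq by simp
qed


lemma agD_other: "\<not> eqA p \<Longrightarrow> \<not> eqB p \<Longrightarrow> ag n D p = ag n C p" by (simp add: agD)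
lemma agD_A: "eqA p \<Longrightarrow> ag n D p = lN" by (simp add: agD)
lemma agD_B: "eqB p \<Longrightarrow> ag n D p = rN" using AB[of p] by (auto simp: agD)

context
  fixes k assumes mk: "modest n C k"
begin

lemma mk_sh: "shield (ag n C (k - int (distL n C k))) = 1"
  using mk by (simp add: modest_def peaceful_def)
lemma mk_sig: "j \<le> distL n C k \<Longrightarrow> signal (ag n C (k - int j)) = 0"
  using mk by (simp add: modest_def peaceful_def)
lemma mk_dist: "j \<le> distL n C k \<Longrightarrow> dist (ag n C (k - int j)) \<le> distL n C k - j"
  using mk dL_shift[OF n0 H] by (simp add: modest_def peaceful_def)
lemma mk_lead: "leader (ag n C (k - int (distL n C k))) = 1" using dL_lead[OF n0 H] .
lemma mk_fol: "j < distL n C k \<Longrightarrow> leader (ag n C (k - int j)) \<noteq> 1" using dL_min .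

lemma seg_lead: assumes j: "j \<le> distL n C k"
  shows "leader (ag n D (k - int j)) = leader (ag n C (k - int j))"
proof (cases "eqB (k - int j)")
  case False then show ?thesis using PD_eq by simp
next
  case True
  note rb = agC_B[OF True]
  show ?thesis
  proof (cases "j < distL n C k")
    case True
    then have "leader rB \<noteq> 1" using mk_fol rb by metis
    then show ?thesis using rN_fol rb agD_B[OF \<open>eqB (k - int j)\<close>] by simp
  next
    case False
    then have je: "j = distL n C k" using j by simp
    have "signal rB = 0" using mk_sig[OF j] rb by simp
    moreover have "shield rB = 1" using mk_sh rb je by simp
    ultimately have "leader rN = leader rB" using rNf(1) by simp
    then show ?thesis using rb agD_B[OF True] by simp
  qed
qed

lemma seg_dL: assumes j: "j \<le> distL n C k"
  shows "distL n D (k - int j) = distL n C k - j"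
proof (rule dL_eq)
  have "leader (ag n D (k - int (distL n C k))) = 1" using seg_lead[of "distL n C k"] mk_lead by simp
  then show "leader (ag n D (k - int j - int (distL n C k - j))) = 1" using j by (simp add: of_nat_diff)
  fix i assume i: "i < distL n C k - j"
  then have "j + i < distL n C k" by simp
  then have "leader (ag n D (k - int (j + i))) \<noteq> 1" using seg_lead[of "j+i"] mk_fol[of "j+i"] by simp
  then show "leader (ag n D (k - int j - int i)) \<noteq> 1" by (simp add: algebra_simps)
qed

lemma seg_sh: "shield (ag n D (k - int (distL n C k))) = 1"
proof -
  let ?p = "k - int (distL n C k)"
  show ?thesis
  proof (cases "eqA ?p")
    case True then show ?thesis using agD_A agC_A mk_sh lNf(3) by simp
  next
    case nA: False
    show ?thesis
    proof (cases "eqB ?p")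
      case True
      have "signal rB = 0" using mk_sig[of "distL n C k"] agC_B[OF True] by simp
      then show ?thesis using agD_B[OF True] agC_B[OF True] mk_sh rNf(4) by simp
    next
      case False then show ?thesis using agD_other nA mk_sh by simp
    qed
  qed
qed

lemma seg_sig: assumes j: "j \<le> distL n C k" and nz: "0 < j \<or> \<not> eqA k"
  shows "signal (ag n D (k - int j)) = 0"
proof -
  let ?p = "k - int j"
  show ?thesis
  proof (cases "eqA ?p")
    case True
    then have j0: "0 < j" using nz by (metis diff_zero of_nat_0 neq0_conv)
    have la: "ag n C ?p = lA" using agC_A[OF True] .
    have eb: "eqB (k - int (j - 1))" using eqA_B[OF True] j0 by (simp add: of_nat_diff algebra_simps)
    have rb: "ag n C (k - int (j - 1)) = rB" using agC_B[OF eb] .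
    have "j - 1 < distL n C k" using j j0 by simp
    then have rf: "leader rB \<noteq> 1" using mk_fol rb by metis
    then have "leader rN = 0" using rN_fol r01 by simp
    moreover have "signal rB = 0" using mk_sig[of "j - 1"] rb j by simp
    moreover have "signal lA = 0" using mk_sig[OF j] la by simp
    ultimately show ?thesis using agD_A[OF True] lNf(4) rNf(5) by simp
  next
    case nA: False
    show ?thesis
    proof (cases "eqB ?p")
      case True
      have "signal rB = 0" using mk_sig[OF j] agC_B[OF True] by simp
      then show ?thesis using agD_B[OF True] rNf(5) by simp
    next
      case False then show ?thesis using agD_other nA mk_sig[OF j] by simp
    qed
  qed
qed

lemma seg_dist: assumes j: "j \<le> distL n C k"
  shows "dist (ag n D (k - int j)) \<le> distL n C k - j"
proof -
  let ?p = "k - int j"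
  show ?thesis
  proof (cases "eqA ?p")
    case True
    then show ?thesis using agD_A[OF True] agC_A[OF True] lNf(2) mk_dist[OF j] by simp
  next
    case nA: False
    show ?thesis
    proof (cases "eqB ?p")
      case True
      note rb = agC_B[OF True]
      show ?thesis
      proof (cases "leader rB = 1")
        case True then show ?thesis using agD_B[OF \<open>eqB ?p\<close>] rNf(2) by simp
      next
        case rf: False
        then have jl: "j < distL n C k" using mk_lead rb j
          by (metis le_neq_implies_less)
        have ea: "eqA (k - int (j + 1))" using eqB_A[OF True] by (simp add: algebra_simps)
        have la: "ag n C (k - int (j + 1)) = lA" using agC_A[OF ea] .
        have "(if leader lA = 1 then 0 else dist lA) \<le> distL n C k - (j + 1)"
          using mk_dist[of "j+1"] jl la by auto
        then have "min ((if leader lA = 1 then 0 else dist lA) + 1) N \<le> distL n C k - j"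
          using jl by linarith
        moreover have "dist rB \<le> distL n C k - j" using mk_dist[OF j] rb by simp
        ultimately show ?thesis using agD_B[OF True] rNf(2) rf by simp
      qed
    next
      case False then show ?thesis using agD_other nA mk_dist[OF j] by simp
    qed
  qed
qed

lemma seg_modest: assumes "\<not> eqA k" shows "modest n D k"
  unfolding modest_def peaceful_def
  using seg_dL[of 0] seg_dL seg_sh seg_sig assms seg_dist by simp

end


definition "bl2 = (if leader lA = 1 \<and> signal lA = 1 then 2 else bullet lA)"

lemma kill_bl2: "leader rB = 1 \<Longrightarrow> leader rN \<noteq> 1 \<Longrightarrow> bl2 = 2"
  using rNf(1) by (auto simp: bl2_def split: if_splits)

lemma bl2_cases: "bl2 = 2 \<Longrightarrow> leader lA = 1 \<or> bullet lA = 2"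
  by (auto simp: bl2_def split: if_splits)

lemma modest_A: "bullet lA = 2 \<Longrightarrow> modest n C A"
  using M agA by auto

lemma HasL_D: "HasL n D"
proof -
  obtain p where p: "leader (ag n C p) = 1" using dL_lead[OF n0 H, of 0] by blast
  show ?thesis
  proof (cases "eqB p \<and> leader rN \<noteq> 1")
    case False
    then have "leader (ag n D p) = 1"
      using PD_eq[of p] p agD_B[of p] by (cases "eqB p") auto
    then show ?thesis using HasL_ag[OF n0] by blast
  next
    case True
    then have "leader rB = 1" using p agC_B by auto
    then have "bl2 = 2" using kill_bl2 True by simp
    then show ?thesis
    proof (cases "leader lA = 1")
      case True
      then have "leader (ag n D A) = 1" using agD_A[OF eqA_A] lNf(1) by simp
      then show ?thesis using HasL_ag[OF n0] by blast
    next
      case False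
      then have "modest n C A" using modest_A bl2_cases \<open>bl2 = 2\<close> by blast
      then have "leader (ag n D (A - int (distL n C A))) = 1"
        using seg_lead[of A "distL n C A"] mk_lead by simp
      then show ?thesis using HasL_ag[OF n0] by blast
    qed
  qed
qed

lemma distD_le: "\<not> eqB p \<Longrightarrow> dist (ag n D p) \<le> dist (ag n C p)"
  by (cases "eqA p") (auto simp: agD_A agC_A agD_other lNf(2))

lemma secD1: "leader (ag n D p) = 1 \<Longrightarrow> dist (ag n D p) = 0"
proof (cases "eqA p")
  case True then show "leader (ag n D p) = 1 \<Longrightarrow> ?thesis" using agD_A agC_A lNf by simp
next
  case nA: False
  show "leader (ag n D p) = 1 \<Longrightarrow> ?thesis"
  proof (cases "eqB p")
    case True then show "leader (ag n D p) = 1 \<Longrightarrow> ?thesis" using agD_B rN_lead1 rNf(2) by simp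
  next
    case False then show "leader (ag n D p) = 1 \<Longrightarrow> ?thesis" using agD_other nA secC1 by simp
  qed
qed

lemma same_pattern: "leader rB \<noteq> 1 \<Longrightarrow> (leader (ag n D q) = 1) = (leader (ag n C q) = 1)"
  using PD_eq[of q] agD_B[of q] agC_B[of q] rN_fol by (cases "eqB q") auto

lemma secD0: assumes fD: "leader (ag n D p) \<noteq> 1"
  shows "dist (ag n D p) + distR n D p \<le> N"
proof (cases "eqB p")
  case True
  show ?thesis
  proof (cases "leader rB = 1")
    case True
    then have "dist (ag n D p) = 0" using agD_B[OF \<open>eqB p\<close>] rNf(2) by simp
    then show ?thesis using dR_lt[OF n0 HasL_D, of p] nN by simp
  next
    case rf: False
    have dR: "distR n D p = distR n C p" using dist_same(2)[OF same_pattern[OF rf]] by simp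
    have f: "leader (ag n C p) \<noteq> 1" using rf agC_B[OF True] by simp
    have r1: "distR n C p = Suc (distR n C (p + 1))" using dR_step[OF f n0 H] .
    have ea: "eqA (p - 1)" using eqB_A[OF True] .
    have "dist rN + distR n C p \<le> N"
    proof (cases "bullet rB = 0")
      case False then show ?thesis using rNf(2) rf secC0[OF f] agC_B[OF True] by simp
    next
      case b0: True
      show ?thesis
      proof (cases "leader lA = 1")
        case True
        have "distR n C p < n" using dR_lt[OF n0 H] .
        then show ?thesis using rNf(2) rf b0 True nN by simp
      next
        case False
        have fl: "leader (ag n C (p - 1)) \<noteq> 1" using False agC_A[OF ea] by simp
        have "distR n C (p - 1) = Suc (distR n C p)" using dR_step[OF fl n0 H] by simp
        moreover have "dist lA + distR n C (p - 1) \<le> N" using secC0[OF fl] agC_A[OF ea] by simp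
        ultimately show ?thesis using rNf(2) rf b0 False by simp
      qed
    qed
    then show ?thesis using dR agD_B[OF True] by simp
  qed
next
  case nB: False
  have fC: "leader (ag n C p) \<noteq> 1" using fD PD_eq[OF nB] by simp
  define d where "d = distR n C p"
  have secp: "dist (ag n C p) + d \<le> N" using secC0[OF fC] d_def by simp
  have ld: "leader (ag n C (p + int d)) = 1" using dR_lead[OF n0 H] d_def by simp
  have dD: "dist (ag n D p) \<le> dist (ag n C p)" using distD_le[OF nB] .
  show ?thesis
  proof (cases "leader (ag n D (p + int d)) = 1")
    case True
    then have "distR n D p \<le> d" by (rule dR_le)
    then show ?thesis using secp dD by simp
  next
    case False
    then have eB: "eqB (p + int d)" using PD_eq ld by metis
    then have "ag n C (p + int d) = rB" by (rule agC_B)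
    then have rl: "leader rB = 1" using ld by simp
    have rNf1: "leader rN \<noteq> 1" using False agD_B[OF eB] by simp
    have bl: "bl2 = 2" using kill_bl2[OF rl rNf1] .
    have d1: "d \<ge> 1" using eB nB by (cases d) auto
    have ea: "eqA (p + int (d - 1))" using eqB_A[OF eB] d1 by (simp add: of_nat_diff algebra_simps)
    have dm: "\<And>i. i < d \<Longrightarrow> leader (ag n C (p + int i)) \<noteq> 1" using dR_min d_def by simp
    have lf: "leader lA \<noteq> 1" using dm[of "d - 1"] d1 agC_A[OF ea] by simp
    then have bA: "bullet lA = 2" using bl2_cases bl by blast
    have mA: "modest n C A" using modest_A[OF bA] .
    define e where "e = distL n C A"
    have Amod: "(p + int (d - 1)) mod int n = A mod int n" using ea A_mod by (simp add: eqA_def)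
    have de: "d - 1 \<le> e"
    proof (rule ccontr)
      assume "\<not> d - 1 \<le> e"
      then have lt: "d - 1 - e < d" "e < d - 1" by auto
      have "(p + int (d - 1 - e)) mod int n = (A - int e) mod int n"
        by (rule mshift[OF Amod]) (use lt in \<open>simp add: of_nat_diff\<close>)
      then have "ag n C (p + int (d - 1 - e)) = ag n C (A - int e)" by (rule ag_cong)
      then show False using dm[OF lt(1)] mk_lead[OF mA] e_def by simp
    qed
    have "(A - int (d - 1)) mod int n = p mod int n"
      by (rule mshift[OF Amod[symmetric]]) simp
    then have "ag n C (A - int (d - 1)) = ag n C p" by (rule ag_cong)
    then have dp: "dist (ag n C p) \<le> e - (d - 1)" using mk_dist[OF mA de[unfolded e_def]] e_def by simp
    have elt: "e < n" using dL_lt[OF n0 H] e_def by simp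
    have "leader (ag n D (A - int e)) = 1" using seg_lead[OF mA, of "distL n C A"] mk_lead[OF mA] e_def by simp
    moreover have "(p + int (n - (e - (d - 1)))) mod int n = (A - int e + int n) mod int n"
      by (rule mshift[OF Amod]) (use de elt in \<open>simp add: of_nat_diff\<close>)
    then have "ag n D (p + int (n - (e - (d - 1)))) = ag n D (A - int e)"
      using ag_cong by (metis mod_add_self2)
    ultimately have "distR n D p \<le> n - (e - (d - 1))" using dR_le by metis
    then show ?thesis using dp dD nN de elt by linarith
  qed
qed


lemma modD: assumes bk: "bullet (ag n D k) = 2" shows "modest n D k"
proof (cases "eqA k")
  case True then show ?thesis using bk agD_A lN_bul by simp
next
  case nA: False
  show ?thesis
  proof (cases "eqB k")
    case False
    then have "bullet (ag n C k) = 2" using bk agD_other nA by simp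
    then have "modest n C k" using M by blast
    then show ?thesis using seg_modest nA by blast
  next
    case eB: True
    have bN: "bullet rN = 2" using bk agD_B[OF eB] by simp
    show ?thesis
    proof (cases "bullet rB = 2")
      case True
      then have "modest n C k" using M agC_B[OF eB] by auto
      then show ?thesis using seg_modest nA by blast
    next
      case False
      then have rf: "leader rB \<noteq> 1" and b0: "bullet rB = 0" and bl: "bl2 = 2"
        using bN rNf(3) unfolding bl2_def by (auto split: if_splits)
      have ea: "eqA (k - 1)" using eqB_A[OF eB] .
      have aC: "ag n C (k - 1) = lA" using agC_A[OF ea] .
      have aD: "ag n D (k - 1) = lN" using agD_A[OF ea] .
      have kD: "ag n D k = rN" using agD_B[OF eB] .
      have lrN: "leader rN = 0" using rN_fol[OF rf] r01[OF rf] by simp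
      have srN: "signal rN = 0" using rNf(5) bl unfolding bl2_def by (auto split: if_splits)
      have kfD: "leader (ag n D k) \<noteq> 1" using kD lrN by simp
      show ?thesis
      proof (cases "leader lA = 1")
        case lt: True
        have dLD: "distL n D k = 1"
        proof (rule dL_eq)
          show "leader (ag n D (k - int 1)) = 1" using aD lNf(1) lt by simp
          fix j :: nat assume "j < 1" then show "leader (ag n D (k - int j)) \<noteq> 1" using kfD by simp
        qed
        have shl: "shield lN = 1"
        proof (cases "signal lA = 1")
          case True then show ?thesis using lNf(3) lt by simp
        next
          case False
          then have "bullet lA = 2" using bl lt unfolding bl2_def by simp
          then have mA: "modest n C A" by (rule modest_A)
          have "distL n C A = 0" using dL_le[of n C A 0] agA lt by simp
          then have "shield lA = 1" using mk_sh[OF mA] agA by simp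
          then show ?thesis using lNf(3) by simp
        qed
        have sgl: "signal lN = 0"
          using lNf(4) srN lrN sl01 lt by (cases "signal lA = 1") auto
        have dr: "dist rN \<le> 1" using rNf(2) rf b0 lt by simp
        have dl: "dist lN = 0" using lNf(2) lt by simp
        show ?thesis unfolding modest_def peaceful_def dLD
        proof (intro conjI allI impI)
          show "shield (ag n D (k - int 1)) = 1" using aD shl by simp
          fix j :: nat assume "j \<le> 1"
          then have "j = 0 \<or> j = 1" by auto
          then show "signal (ag n D (k - int j)) = 0" using kD aD srN sgl by auto
        next
          fix j :: nat assume "j \<le> 1"
          then have "j = 0 \<or> j = 1" by auto
          then show "dist (ag n D (k - int j)) \<le> distL n D (k - int j)" using kD aD dr dl dLD by auto
        qed
      next
        case lf: False
        then have "bullet lA = 2" using bl unfolding bl2_def by simp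
        then have mA: "modest n C (k - 1)" using M aC by auto
        define e where "e = distL n C (k - 1)"
        have dLD: "distL n D k = e + 1"
        proof (rule dL_eq)
          have "leader (ag n D (k - 1 - int e)) = 1"
            using seg_lead[OF mA, of e] mk_lead[OF mA] e_def by simp
          then show "leader (ag n D (k - int (e + 1))) = 1" by (simp add: algebra_simps)
          fix i :: nat assume i: "i < e + 1"
          show "leader (ag n D (k - int i)) \<noteq> 1"
          proof (cases i)
            case 0 then show ?thesis using kfD by simp
          next
            case (Suc i')
            then have "i' < distL n C (k - 1)" using i e_def by simp
            then have "leader (ag n D (k - 1 - int i')) \<noteq> 1"
              using seg_lead[OF mA, of i'] mk_fol[OF mA, of i'] by simp
            then show ?thesis using Suc by (simp add: algebra_simps)
          qed
        qed
        have dlA: "dist lA \<le> e" using mk_dist[OF mA, of 0] aC e_def by simp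
        have dr: "dist rN \<le> e + 1" using rNf(2) rf b0 lf dlA by simp
        have sgl: "signal lN = 0"
          using lNf(4) srN lrN mk_sig[OF mA, of 0] aC lf by simp
        show ?thesis unfolding modest_def peaceful_def dLD
        proof (intro conjI allI impI)
          have "shield (ag n D (k - 1 - int e)) = 1" using seg_sh[OF mA] e_def by simp
          then show "shield (ag n D (k - int (e + 1))) = 1" by (simp add: algebra_simps)
          fix j :: nat assume j: "j \<le> e + 1"
          show "signal (ag n D (k - int j)) = 0"
          proof (cases j)
            case 0 then show ?thesis using kD srN by simp
          next
            case (Suc j')
            then have kj: "k - int j = k - 1 - int j'" by simp
            show ?thesis
            proof (cases j')
              case 0 then show ?thesis using kj aD sgl by simp
            next
              case (Suc j'')
              then show ?thesis using kj seg_sig[OF mA, of j'] j \<open>j = Suc j'\<close> e_def by (simp add: algebra_simps)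
            qed
          qed
        next
          fix j :: nat assume j: "j \<le> e + 1"
          show "dist (ag n D (k - int j)) \<le> distL n D (k - int j)"
          proof (cases j)
            case 0 then show ?thesis using kD dr dLD by simp
          next
            case (Suc j')
            then have kj: "k - int j = k - 1 - int j'" by simp
            have "j' \<le> distL n C (k - 1)" using j Suc e_def by simp
            then show ?thesis unfolding kj using seg_dist[OF mA, of j'] seg_dL[OF mA, of j'] by simp
          qed
        qed
      qed
    qed
  qed
qed

lemma validD: "valid_config n N D"
  unfolding valid_config_def using vD ag_int by metis

lemma secD: "secure n N D k"
  unfolding secure_def using secD1[of k] secD0[of k] by auto

lemma nonew: "i < n \<Longrightarrow> leader (C i) = 0 \<Longrightarrow> leader (D i) = 0"
proof -
  assume i: "i < n" and l0: "leader (C i) = 0"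
  have "leader (ag n D (int i)) \<noteq> 1" using PD_imp[of "int i"] ag_int[OF i, of C] l0 by auto
  then have "leader (D i) \<noteq> 1" using ag_int[OF i, of D] by simp
  moreover have "valid_state N (D i)" using vD[of "int i"] ag_int[OF i, of D] by simp
  ultimately show ?thesis by (simp add: valid_state_def)
qed

end

definition Inv :: "nat \<Rightarrow> nat \<Rightarrow> config \<Rightarrow> bool" where
  "Inv n N C \<longleftrightarrow> valid_config n N C \<and> HasL n C \<and> (\<forall>k. secure n N C k) \<and>
     (\<forall>k. bullet (ag n C k) = 2 \<longrightarrow> modest n C k)"

lemma inv_step:
  assumes "2 \<le> n" "n \<le> N" "Inv n N C" "step n N C C'"
  shows "Inv n N C' \<and> (\<forall>i<n. leader (C i) = 0 \<longrightarrow> leader (C' i) = 0)"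
proof -
  obtain i where i: "i < n" and C': "C' = C(i := fst (prl_trans N (C i) (C (Suc i mod n))),
             Suc i mod n := snd (prl_trans N (C i) (C (Suc i mod n))))"
    using assms(4) unfolding step_def by blast
  interpret stp n N C i using assms(1,2,3) i unfolding Inv_def by unfold_locales auto
  have "C' = D" unfolding C' D_def lN_def rN_def lA_def rB_def b_def ..
  then show ?thesis unfolding Inv_def using validD HasL_D secD modD nonew by auto
qed


lemma dR_cong: "p mod int n = p' mod int n \<Longrightarrow> distR n C p = distR n C p'"
proof -
  assume h: "p mod int n = p' mod int n"
  have "\<And>j. ag n C (p + int j) = ag n C (p' + int j)"
    by (rule ag_cong, rule mshift[OF h]) simp
  then show ?thesis unfolding distR_def by simp
qed

lemma secure_cong: "p mod int n = p' mod int n \<Longrightarrow> secure n N C p = secure n N C p'"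
  unfolding secure_def using ag_cong[of p n p' C] dR_cong[of p n p' C] by simp

lemma modest_cong: assumes h: "p mod int n = p' mod int n" shows "modest n C p = modest n C p'"
proof -
  have 1: "distL n C p = distL n C p'" using dL_cong[OF h] .
  have 2: "\<And>j. (p - int j) mod int n = (p' - int j) mod int n" by (rule mshift[OF h]) simp
  have 3: "\<And>j. ag n C (p - int j) = ag n C (p' - int j)" using ag_cong[OF 2] .
  have 4: "\<And>j. distL n C (p - int j) = distL n C (p' - int j)" using dL_cong[OF 2] .
  show ?thesis unfolding modest_def peaceful_def 1 3 4 ..
qed

lemma mod_rep: "0 < n \<Longrightarrow> k mod int n = int (nat (k mod int n)) mod int n \<and> nat (k mod int n) < n"
  by (simp add: nat_less_iff)

lemma init_inv:
  assumes "2 \<le> n" "valid_config n N C" "C_NI n N C"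
  shows "Inv n N C"
proof -
  have n0: "0 < n" using assms(1) by simp
  have H: "HasL n C" using assms(3) unfolding C_NI_def C_PB_def HasL_def by blast
  have S: "secure n N C k" for k
  proof -
    have "secure n N C (int (nat (k mod int n)))" using assms(3) mod_rep[OF n0, of k] unfolding C_NI_def by blast
    then show ?thesis using secure_cong mod_rep[OF n0, of k] by metis
  qed
  have M: "modest n C k" if "bullet (ag n C k) = 2" for k
  proof -
    have "bullet (C (nat (k mod int n))) = 2" using that by (simp add: ag_def)
    then have "modest n C (int (nat (k mod int n)))" using assms(3) mod_rep[OF n0, of k] unfolding C_NI_def by blast
    then show ?thesis using modest_cong mod_rep[OF n0, of k] by metis
  qed
  show ?thesis unfolding Inv_def using assms(2) H S M by blast
qed

theorem lemma7:
  fixes n N :: nat and C0 :: config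
  assumes "2 \<le> n" and "n \<le> N"
    and "valid_config n N C0"
    and "C_NI n N C0"
  shows "\<forall>D D'. reachable n N C0 D \<longrightarrow> step n N D D' \<longrightarrow>
           (\<forall>i<n. leader (D i) = 0 \<longrightarrow> leader (D' i) = 0)"
proof (intro allI impI)
  fix D D' i assume r: "reachable n N C0 D" and s: "step n N D D'" and i: "i < n" and l0: "leader (D i) = 0"
  have "Inv n N D" using r unfolding reachable_def
  proof (induction rule: rtranclp_induct)
    case base then show ?case using init_inv assms by blast
  next
    case (step y z) then show ?case using inv_step assms(1,2) by blast
  qed
  then show "leader (D' i) = 0" using inv_step assms(1,2) s i l0 by blast
qed

end
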